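(* Let $X$ be a locally Hausdorff $T_1$ topological space and let $f:X\to X$ be a continuous weak topological contraction. Then $f$ has a unique fixed point.
   Context: A space $X$ is locally Hausdorff if every point has an open neighbourhood $U$ such that $U$ with the subspace topology is Hausdorff. A mapping $f:X\to X$ is a weak topological contraction if for every open cover $\mathcal{U}$ of $X$ and every pair of points $x,y\in X$ there exist $n\in\mathbb{N}_0=\{0,1,2,\dots\}$ and $U\in\mathcal{U}$ such that $f^n[\{x,y\}]\subseteq U$, where $f^n$ is the $n$-fold iterate and $f^0$ the identity. *)

theory Defs
  imports "HOL-Analysis.Analysis"
begin

definition locally_Hausdorff :: "'a topology \<Rightarrow> bool" where
  "locally_Hausdorff X \<longleftrightarrow>
     (\<forall>x\<in>topspace X. \<exists>U. openin X U \<and> x \<in> U \<and> Hausdorff_space (subtopology X U))"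

definition weak_top_contraction :: "'a topology \<Rightarrow> ('a \<Rightarrow> 'a) \<Rightarrow> bool" where
  "weak_top_contraction X f \<longleftrightarrow>
     (\<forall>\<U>. (\<forall>U\<in>\<U>. openin X U) \<and> topspace X \<subseteq> \<Union>\<U> \<longrightarrow>
        (\<forall>x\<in>topspace X. \<forall>y\<in>topspace X.
           \<exists>n::nat. \<exists>U\<in>\<U>. (f ^^ n) ` {x, y} \<subseteq> U))"

end

theory Submission
  imports Defs
begin

definition sepd :: "'a topology \<Rightarrow> 'a \<Rightarrow> 'a \<Rightarrow> bool" where
  "sepd X a b \<longleftrightarrow> (\<exists>A B. openin X A \<and> openin X B \<and> a \<in> A \<and> b \<in> B \<and> disjnt A B)"

lemma sepd_back:
  assumes "continuous_map X X f" "a \<in> topspace X" "b \<in> topspace X" "sepd X (f a) (f b)"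
  shows "sepd X a b"
proof -
  obtain A B where AB: "openin X A" "openin X B" "f a \<in> A" "f b \<in> B" "disjnt A B"
    using assms(4) unfolding sepd_def by blast
  have "openin X {x \<in> topspace X. f x \<in> A}" "openin X {x \<in> topspace X. f x \<in> B}"
    using openin_continuous_map_preimage[OF assms(1)] AB by auto
  moreover have "disjnt {x \<in> topspace X. f x \<in> A} {x \<in> topspace X. f x \<in> B}"
    using AB(5) by (auto simp: disjnt_def)
  ultimately show ?thesis unfolding sepd_def using assms AB by blast
qed

lemma fp_iter: "f x = x \<Longrightarrow> (f ^^ n) x = x"
  by (induction n) auto

lemma iter_in:
  assumes "continuous_map X X f" "x \<in> topspace X"
  shows "(f ^^ n) x \<in> topspace X"
  using assms by (induction n) (auto simp: continuous_map_def)

lemma insep_prop: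
  assumes "continuous_map X X f" "x \<in> topspace X" "\<not> sepd X x (f x)"
  shows "\<not> sepd X ((f ^^ n) x) (f ((f ^^ n) x))"
proof (induction n)
  case 0 then show ?case using assms by simp
next
  case (Suc n)
  have "(f ^^ n) x \<in> topspace X" "f ((f ^^ n) x) \<in> topspace X"
    using iter_in[OF assms(1,2)] assms(1) by (auto simp: continuous_map_def)
  then show ?case using Suc sepd_back[OF assms(1)] by auto
qed

theorem theorem16:
  fixes X :: "'a topology" and f :: "'a \<Rightarrow> 'a"
  assumes "topspace X \<noteq> {}"
    and "locally_Hausdorff X"
    and "t1_space X"
    and "continuous_map X X f"
    and "weak_top_contraction X f"
  shows "\<exists>!x. x \<in> topspace X \<and> f x = x"
proof -
  have fX: "\<And>z. z \<in> topspace X \<Longrightarrow> f z \<in> topspace X"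
    using assms(4) by (auto simp: continuous_map_def)
  have wc: "\<And>\<U> x y. (\<forall>U\<in>\<U>. openin X U) \<Longrightarrow> topspace X \<subseteq> \<Union>\<U> \<Longrightarrow> x \<in> topspace X
      \<Longrightarrow> y \<in> topspace X \<Longrightarrow> \<exists>n. \<exists>U\<in>\<U>. (f ^^ n) ` {x, y} \<subseteq> U"
    using assms(5) unfolding weak_top_contraction_def by blast
  have uniq: "x = y" if H: "x \<in> topspace X" "f x = x" "y \<in> topspace X" "f y = y" for x y
  proof (rule ccontr)
    assume ne: "x \<noteq> y"
    let ?U = "{topspace X - {x}, topspace X - {y}}"
    have "\<forall>U\<in>?U. openin X U"
      using assms(3) t1_space_openin_delete_alt[of X] openin_topspace[of X] by blast
    moreover have "topspace X \<subseteq> \<Union>?U" using ne by auto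
    ultimately obtain n U where nU: "U \<in> ?U" "(f ^^ n) ` {x, y} \<subseteq> U"
      using wc[of ?U x y] H(1,3) by blast
    have "(f ^^ n) x = x" "(f ^^ n) y = y"
      using H(2,4) by (simp_all add: fp_iter)
    with nU show False by auto
  qed
  have ex: "\<exists>x. x \<in> topspace X \<and> f x = x"
  proof (rule ccontr)
    assume nofix: "\<not> ?thesis"
    show False
    proof (cases "\<exists>x\<in>topspace X. \<not> sepd X x (f x)")
      case True
      then obtain x where x: "x \<in> topspace X" "\<not> sepd X x (f x)" by blast
      let ?U = "{U. openin X U \<and> Hausdorff_space (subtopology X U)}"
      have "topspace X \<subseteq> \<Union>?U"
        using assms(2) unfolding locally_Hausdorff_def by blast
      then obtain n U where U: "U \<in> ?U" "(f ^^ n) ` {x, f x} \<subseteq> U"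
        using wc[of ?U x "f x"] x fX by blast
      define a where "a = (f ^^ n) x"
      have fa: "(f ^^ n) (f x) = f a" unfolding a_def by (metis comp_apply funpow_Suc_right funpow_swap1)
      have a: "a \<in> topspace X" "f a \<in> topspace X" "a \<noteq> f a"
      proof -
        show "a \<in> topspace X" using iter_in[OF assms(4) x(1)] a_def by simp
        then show "f a \<in> topspace X" using fX by blast
        show "a \<noteq> f a" using nofix \<open>a \<in> topspace X\<close> by metis
      qed
      have ns: "\<not> sepd X a (f a)" using insep_prop[OF assms(4) x] a_def by simp
      have inU: "a \<in> U" "f a \<in> U" using U(2) fa a_def by auto
      then obtain A B where AB: "openin (subtopology X U) A" "openin (subtopology X U) B"
          "a \<in> A" "f a \<in> B" "disjnt A B"
      proof -
        have H: "\<forall>x y. x \<in> topspace X \<and> x \<in> U \<and> y \<in> topspace X \<and> y \<in> U \<and> x \<noteq> y \<longrightarrow>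
            (\<exists>Ua. openin (subtopology X U) Ua \<and> (\<exists>V. openin (subtopology X U) V \<and>
                       x \<in> Ua \<and> y \<in> V \<and> disjnt Ua V))"
          using U(1) unfolding Hausdorff_space_def by (simp add: topspace_subtopology)
        show ?thesis using H[rule_format, of a "f a"] a inU that by blast
      qed
      have "openin X A" "openin X B"
        using AB(1,2) U(1) by (auto simp: openin_open_subtopology)
      then have "sepd X a (f a)" unfolding sepd_def using AB by blast
      then show False using ns by blast
    next
      case False
      let ?U = "{V. openin X V \<and> (\<forall>w\<in>V. f w \<notin> V)}"
      have "topspace X \<subseteq> \<Union>?U"
      proof
        fix z assume z: "z \<in> topspace X"
        then obtain A B where AB: "openin X A" "openin X B" "z \<in> A" "f z \<in> B" "disjnt A B"
          using False unfolding sepd_def by blast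
        let ?V = "A \<inter> {x \<in> topspace X. f x \<in> B}"
        have "openin X ?V"
          using AB openin_continuous_map_preimage[OF assms(4) AB(2)] by auto
        moreover have "\<forall>w\<in>?V. f w \<notin> ?V" using AB(5) by (auto simp: disjnt_def)
        moreover have "z \<in> ?V" using z AB by auto
        ultimately show "z \<in> \<Union>?U" by blast
      qed
      obtain x where x: "x \<in> topspace X" using assms(1) by blast
      then obtain n U where U: "U \<in> ?U" "(f ^^ n) ` {x, f x} \<subseteq> U"
        using wc[of ?U x "f x"] fX \<open>topspace X \<subseteq> \<Union>?U\<close> by blast
      have fa: "(f ^^ n) (f x) = f ((f ^^ n) x)" by (metis comp_apply funpow_Suc_right funpow_swap1)
      show False using U fa by auto
    qed
  qed
  show ?thesis using ex uniq by blast
qed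

end
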